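(* Let $G$ be a finite undirected graph, $k$ and $\tau\ge1$ integers, and $e=(u,v)\in E(G)$. If $d_\tau(u,G)\le k-1$ or $d_\tau(v,G)\le k-1$, then $\phi_\tau(e,G)\le k$.
   Context: Graphs are finite, simple, undirected and unweighted; paths may repeat vertices and their length is the number of edges. For vertices $v,u$ of a graph $H$, $u$ is $\tau$-hop reachable from $v$ in $H$ if there is a path between them in $H$ of length at most $\tau$. $N_\tau(v,H)$ is the set of vertices $u\ne v$ that are $\tau$-hop reachable from $v$ in $H$, and $d_\tau(v,H)=|N_\tau(v,H)|$. For an edge $e=(u,v)$ of $H$, $\Delta_\tau(e,H)=N_\tau(u,H)\cap N_\tau(v,H)$ and $\mathrm{sup}_\tau(e,H)=|\Delta_\tau(e,H)|$. The $(k,\tau)$-truss of $G$ is the maximal subgraph $G'$ of $G$ such that $\mathrm{sup}_\tau(e,G')\ge k-2$ for every $e\in E(G')$ (supports computed inside $G'$) and no more edges of $G$ can be added while keeping this property; a subgraph is determined by its edge set. The higher-order truss number $\phi_\tau(e,G)$ is the maximum $k$ such that $e$ belongs to the $(k,\tau)$-truss of $G$. *)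

theory Defs
  imports Main
begin

text \<open>A finite simple undirected graph is represented by its edge set: a finite set of
  2-element vertex sets. Subgraphs are edge subsets.\<close>

definition simple_graph :: "'a set set \<Rightarrow> bool" where
  "simple_graph G \<longleftrightarrow> finite G \<and> (\<forall>e\<in>G. card e = 2)"

text \<open>A path (vertices may repeat) given as a nonempty vertex list; its length is the
  number of edges, i.e. length minus one.\<close>
definition is_path :: "'a set set \<Rightarrow> 'a list \<Rightarrow> bool" where
  "is_path H xs \<longleftrightarrow> xs \<noteq> [] \<and> (\<forall>i. Suc i < length xs \<longrightarrow> {xs ! i, xs ! Suc i} \<in> H)"

definition hop_reachable :: "'a set set \<Rightarrow> nat \<Rightarrow> 'a \<Rightarrow> 'a \<Rightarrow> bool" where
  "hop_reachable H \<tau> v u \<longleftrightarrow>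
     (\<exists>xs. is_path H xs \<and> hd xs = v \<and> last xs = u \<and> length xs - 1 \<le> \<tau>)"

definition nbhd :: "nat \<Rightarrow> 'a \<Rightarrow> 'a set set \<Rightarrow> 'a set" where
  "nbhd \<tau> v H = {u. u \<noteq> v \<and> hop_reachable H \<tau> v u}"

definition hdeg :: "nat \<Rightarrow> 'a \<Rightarrow> 'a set set \<Rightarrow> nat" where
  "hdeg \<tau> v H = card (nbhd \<tau> v H)"

definition hsupp :: "nat \<Rightarrow> 'a \<Rightarrow> 'a \<Rightarrow> 'a set set \<Rightarrow> nat" where
  "hsupp \<tau> u v H = card (nbhd \<tau> u H \<inter> nbhd \<tau> v H)"

definition truss_valid :: "int \<Rightarrow> nat \<Rightarrow> 'a set set \<Rightarrow> bool" where
  "truss_valid k \<tau> H \<longleftrightarrow>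
     (\<forall>u v. {u, v} \<in> H \<longrightarrow> int (hsupp \<tau> u v H) \<ge> k - 2)"

definition is_truss :: "'a set set \<Rightarrow> int \<Rightarrow> nat \<Rightarrow> 'a set set \<Rightarrow> bool" where
  "is_truss G k \<tau> H \<longleftrightarrow> H \<subseteq> G \<and> truss_valid k \<tau> H \<and>
     (\<forall>H'. H \<subseteq> H' \<and> H' \<subseteq> G \<and> truss_valid k \<tau> H' \<longrightarrow> H' = H)"

definition truss_number :: "nat \<Rightarrow> 'a set \<Rightarrow> 'a set set \<Rightarrow> int" where
  "truss_number \<tau> e G = (GREATEST k. \<exists>H. is_truss G k \<tau> H \<and> e \<in> H)"

end

theory Submission
  imports Defs
begin

lemma nbhd_sub: "nbhd t w G \<subseteq> \<Union>G"
proof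
  fix x assume "x \<in> nbhd t w G"
  then obtain xs where p: "is_path G xs" "hd xs = w" "last xs = x" "x \<noteq> w"
    unfolding nbhd_def hop_reachable_def by auto
  have ne: "xs \<noteq> []" using p unfolding is_path_def by auto
  have "length xs \<noteq> 1"
  proof
    assume "length xs = 1"
    then obtain a where "xs = [a]" by (cases xs) auto
    thus False using p by auto
  qed
  hence l: "length xs \<ge> 2" using ne by (cases xs) (auto simp: Suc_le_eq)
  define n where "n = length xs - 2"
  have "Suc n < length xs" using l n_def by auto
  hence "{xs ! n, xs ! Suc n} \<in> G" using p unfolding is_path_def by auto
  moreover have "Suc n = length xs - 1" using l n_def by simp
  hence "xs ! Suc n = x" using p(3) ne by (simp add: last_conv_nth)
  ultimately show "x \<in> \<Union>G" by auto
qed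

lemma nbhd_mono: "H \<subseteq> G \<Longrightarrow> nbhd t w H \<subseteq> nbhd t w G"
proof
  fix x assume H: "H \<subseteq> G" and "x \<in> nbhd t w H"
  then obtain xs where p: "is_path H xs" "hd xs = w" "last xs = x" "length xs - 1 \<le> t" "x \<noteq> w"
    unfolding nbhd_def hop_reachable_def by auto
  have "is_path G xs" using p(1) H unfolding is_path_def by auto
  thus "x \<in> nbhd t w G" using p unfolding nbhd_def hop_reachable_def by auto
qed

lemma edge_in_nbhd: "{u,v} \<in> H \<Longrightarrow> u \<noteq> v \<Longrightarrow> t \<ge> 1 \<Longrightarrow> v \<in> nbhd t u H"
  unfolding nbhd_def hop_reachable_def is_path_def
  apply (rule CollectI, rule conjI, simp)
  apply (rule exI[of _ "[u,v]"])
  using less_Suc_eq by auto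

lemma key:
  assumes "simple_graph G" "t \<ge> 1" "{u,v} \<in> H" "H \<subseteq> G" "u \<noteq> v"
  shows "hsupp t u v H + 1 \<le> hdeg t u G"
proof -
  have fG: "finite G" and c2: "\<And>e. e \<in> G \<Longrightarrow> card e = 2"
    using assms(1) unfolding simple_graph_def by auto
  have "\<And>e. e \<in> G \<Longrightarrow> finite e"
  proof -
    fix e assume "e \<in> G"
    hence "card e = 2" by (rule c2)
    thus "finite e" by (intro card_ge_0_finite) simp
  qed
  hence fin: "finite (\<Union>G)" using fG by (intro finite_Union)
  have f: "finite (nbhd t u G)" using nbhd_sub fin by (rule finite_subset)
  have vin: "v \<in> nbhd t u G"
    using edge_in_nbhd[OF assms(3) assms(5) assms(2)] nbhd_mono[OF assms(4), of t u] by blast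
  have sub0: "nbhd t u H \<subseteq> nbhd t u G" using nbhd_mono[OF assms(4), of t u] .
  have sub: "insert v (nbhd t u H \<inter> nbhd t v H) \<subseteq> nbhd t u G"
    using vin sub0 by blast
  have vn: "v \<notin> nbhd t v H" unfolding nbhd_def by simp
  have le: "card (insert v (nbhd t u H \<inter> nbhd t v H)) \<le> card (nbhd t u G)"
    using f sub by (rule card_mono)
  have fi: "finite (nbhd t u H \<inter> nbhd t v H)"
    using finite_subset[OF sub f] by simp
  have "card (insert v (nbhd t u H \<inter> nbhd t v H)) = card (nbhd t u H \<inter> nbhd t v H) + 1"
    using fi vn by simp
  thus ?thesis unfolding hsupp_def hdeg_def using le by simp
qed

theorem lemma7:
  fixes G :: "'a set set" and k :: int and \<tau> :: nat and u v :: 'a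
  assumes "simple_graph G"
    and "\<tau> \<ge> 1"
    and "{u, v} \<in> G"
    and "int (hdeg \<tau> u G) \<le> k - 1 \<or> int (hdeg \<tau> v G) \<le> k - 1"
  shows "truss_number \<tau> {u, v} G \<le> k"
proof -
  define S where "S = {k'. \<exists>H. is_truss G k' \<tau> H \<and> {u,v} \<in> H}"
  have uv: "u \<noteq> v"
  proof
    assume "u = v"
    hence "card {u,v} = 1" by simp
    moreover have "card {u,v} = 2" using assms(1,3) unfolding simple_graph_def by blast
    ultimately show False by simp
  qed
  have bound: "k' \<le> k" if kS: "k' \<in> S" for k'
  proof -
    obtain H where H: "is_truss G k' \<tau> H" "{u,v} \<in> H" using kS unfolding S_def by blast
    have hs: "int (hsupp \<tau> u v H) \<ge> k' - 2" using H unfolding is_truss_def truss_valid_def by blast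
    have "H \<subseteq> G" using H(1) unfolding is_truss_def by blast
    have "{v,u} \<in> H" using H(2) by (simp add: insert_commute)
    have "hsupp \<tau> u v H = hsupp \<tau> v u H" unfolding hsupp_def by (simp add: Int_commute)
    moreover have "hsupp \<tau> u v H + 1 \<le> hdeg \<tau> u G"
      using key[OF assms(1,2) H(2) \<open>H \<subseteq> G\<close> uv] .
    moreover have "hsupp \<tau> v u H + 1 \<le> hdeg \<tau> v G"
      using key[OF assms(1,2) \<open>{v,u} \<in> H\<close> \<open>H \<subseteq> G\<close>] uv by simp
    ultimately show ?thesis using assms(4) hs by linarith
  qed
  have "is_truss G 0 \<tau> G" unfolding is_truss_def truss_valid_def by (simp add: subset_antisym)
  hence "0 \<in> S" unfolding S_def using assms(3) by blast
  define m where "m = Max (S \<inter> {0..k})"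
  have fs: "finite (S \<inter> {0..k})" by (rule finite_Int) simp
  have "0 \<in> S \<inter> {0..k}" using \<open>0 \<in> S\<close> bound by auto
  hence ne: "S \<inter> {0..k} \<noteq> {}" by blast
  have mS0: "m \<in> S \<inter> {0..k}" unfolding m_def using Max_in[OF fs ne] .
  hence mS: "m \<in> S" "m \<le> k" by auto
  have mx: "y \<le> m" if "y \<in> S" for y
  proof (cases "y \<ge> 0")
    case True
    hence "y \<in> S \<inter> {0..k}" using that bound by auto
    thus ?thesis unfolding m_def using Max_ge[OF fs] by blast
  next
    case False
    have "0 \<le> m" unfolding m_def using Max_ge[OF fs \<open>0 \<in> S \<inter> {0..k}\<close>] .
    thus ?thesis using False by simp
  qed
  have "truss_number \<tau> {u, v} G = m" unfolding truss_number_def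
  proof (rule Greatest_equality)
    show "\<exists>H. is_truss G m \<tau> H \<and> {u, v} \<in> H" using mS(1) unfolding S_def by blast
    fix y assume "\<exists>H. is_truss G y \<tau> H \<and> {u, v} \<in> H"
    hence "y \<in> S" unfolding S_def by blast
    thus "y \<le> m" by (rule mx)
  qed
  thus ?thesis using mS by simp
qed

end
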